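(* Let $\mathcal F$ be an $F$-category, $\mathcal C=\mathcal F^{(0)}$ its full subcategory of connected objects, $\jmath:\mathcal C\hookrightarrow\mathcal F$ the inclusion, and $J$ a Grothendieck topology on $\mathcal C$. A presheaf of sets $G$ on $\mathcal F$ is a sheaf for $\jmath_*J$ if and only if (a) its restriction to $\mathcal C$ is a $J$-sheaf, (b) $G(\emptyset)$ is a one-point set for an initial object $\emptyset$, and (c) for every finite family $(N_i)_{i\in I}$ of objects, the maps induced by the coprojections give a bijection $G(\coprod_i N_i)\to\prod_i G(N_i)$.
   Context: An object $Y$ of a category with initial object and finite coproducts is connected if for every finite family $(N_i)_{i\in I}$ the natural map $\coprod_i\operatorname{Hom}(Y,N_i)\to\operatorname{Hom}(Y,\coprod_iN_i)$ is bijective. An $F$-category is a category having an initial object and finite coproducts in which every object is isomorphic to a finite coproduct of connected objects. For a functor $F:\mathcal C\to\mathcal D$ and a topology $J$ on $\mathcal C$, the pushforward topology $F_*J$ on $\mathcal D$ is the finest topology making $F$ cocontinuous; explicitly, a sieve $R$ on $X\in\mathcal D$ is $F_*J$-covering iff for every object $Y$ of $\mathcal C$ and every morphism $f:F(Y)\to X$, the sieve $\{g:Z\to Y : f\circ F(g)\in R\}$ on $Y$ belongs to $J(Y)$. *)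

theory Defs
  imports "HOL-Library.FuncSet"
begin

text \<open>Small categories given explicitly by objects, arrows, domain, codomain,
identities and composition. Comp g f is the composite of g after f.\<close>

record ('o, 'm) cat =
  Obj :: "'o set"
  Arr :: "'m set"
  Dom :: "'m \<Rightarrow> 'o"
  Cod :: "'m \<Rightarrow> 'o"
  Id  :: "'o \<Rightarrow> 'm"
  Comp :: "'m \<Rightarrow> 'm \<Rightarrow> 'm"

definition hom :: "('o, 'm) cat \<Rightarrow> 'o \<Rightarrow> 'o \<Rightarrow> 'm set" where
  "hom C X Y = {f \<in> Arr C. Dom C f = X \<and> Cod C f = Y}"

definition category :: "('o, 'm) cat \<Rightarrow> bool" where
  "category C \<longleftrightarrow>
     (\<forall>f \<in> Arr C. Dom C f \<in> Obj C \<and> Cod C f \<in> Obj C) \<and>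
     (\<forall>X \<in> Obj C. Id C X \<in> hom C X X) \<and>
     (\<forall>f \<in> Arr C. \<forall>g \<in> Arr C. Cod C f = Dom C g \<longrightarrow>
        Comp C g f \<in> hom C (Dom C f) (Cod C g)) \<and>
     (\<forall>f \<in> Arr C. Comp C f (Id C (Dom C f)) = f \<and> Comp C (Id C (Cod C f)) f = f) \<and>
     (\<forall>f \<in> Arr C. \<forall>g \<in> Arr C. \<forall>h \<in> Arr C.
        Cod C f = Dom C g \<longrightarrow> Cod C g = Dom C h \<longrightarrow>
        Comp C h (Comp C g f) = Comp C (Comp C h g) f)"

definition is_iso :: "('o, 'm) cat \<Rightarrow> 'm \<Rightarrow> bool" where
  "is_iso C f \<longleftrightarrow> f \<in> Arr C \<and>
     (\<exists>g \<in> hom C (Cod C f) (Dom C f).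
        Comp C g f = Id C (Dom C f) \<and> Comp C f g = Id C (Cod C f))"

definition isomorphic :: "('o, 'm) cat \<Rightarrow> 'o \<Rightarrow> 'o \<Rightarrow> bool" where
  "isomorphic C X Y \<longleftrightarrow> (\<exists>f \<in> hom C X Y. is_iso C f)"

definition is_initial :: "('o, 'm) cat \<Rightarrow> 'o \<Rightarrow> bool" where
  "is_initial C Z \<longleftrightarrow> Z \<in> Obj C \<and> (\<forall>Y \<in> Obj C. \<exists>!f. f \<in> hom C Z Y)"

text \<open>A finite family is indexed by {..<n}. (S, \<iota>) is a coproduct of N_0,...,N_{n-1}
with coprojections \<iota> i : N i \<rightarrow> S. For n = 0 this says S is initial.\<close>

definition is_coproduct ::
  "('o, 'm) cat \<Rightarrow> nat \<Rightarrow> (nat \<Rightarrow> 'o) \<Rightarrow> 'o \<Rightarrow> (nat \<Rightarrow> 'm) \<Rightarrow> bool" where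
  "is_coproduct C n N S \<iota> \<longleftrightarrow>
     S \<in> Obj C \<and> (\<forall>i<n. N i \<in> Obj C \<and> \<iota> i \<in> hom C (N i) S) \<and>
     (\<forall>Y \<in> Obj C. \<forall>f. (\<forall>i<n. f i \<in> hom C (N i) Y) \<longrightarrow>
        (\<exists>!u. u \<in> hom C S Y \<and> (\<forall>i<n. Comp C u (\<iota> i) = f i)))"

definition has_finite_coproducts :: "('o, 'm) cat \<Rightarrow> bool" where
  "has_finite_coproducts C \<longleftrightarrow>
     (\<forall>n N. (\<forall>i<n. N i \<in> Obj C) \<longrightarrow> (\<exists>S \<iota>. is_coproduct C n N S \<iota>))"

definition connected :: "('o, 'm) cat \<Rightarrow> 'o \<Rightarrow> bool" where
  "connected C Y \<longleftrightarrow> Y \<in> Obj C \<and>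
     (\<forall>n N S \<iota>. is_coproduct C n N S \<iota> \<longrightarrow>
        bij_betw (\<lambda>(i, g). Comp C (\<iota> i) g) (SIGMA i:{..<n}. hom C Y (N i)) (hom C Y S))"

definition F_category :: "('o, 'm) cat \<Rightarrow> bool" where
  "F_category C \<longleftrightarrow> category C \<and> has_finite_coproducts C \<and>
     (\<forall>X \<in> Obj C. \<exists>n N S \<iota>. (\<forall>i<n. connected C (N i)) \<and>
        is_coproduct C n N S \<iota> \<and> isomorphic C X S)"

definition full_sub :: "('o, 'm) cat \<Rightarrow> ('o \<Rightarrow> bool) \<Rightarrow> ('o, 'm) cat" where
  "full_sub C P =
     \<lparr> Obj = {X \<in> Obj C. P X},
       Arr = {f \<in> Arr C. P (Dom C f) \<and> P (Cod C f)},
       Dom = Dom C, Cod = Cod C, Id = Id C, Comp = Comp C \<rparr>"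

definition connected_part :: "('o, 'm) cat \<Rightarrow> ('o, 'm) cat" where
  "connected_part C = full_sub C (connected C)"

definition sieve :: "('o, 'm) cat \<Rightarrow> 'o \<Rightarrow> 'm set \<Rightarrow> bool" where
  "sieve C X S \<longleftrightarrow> S \<subseteq> {f \<in> Arr C. Cod C f = X} \<and>
     (\<forall>f \<in> S. \<forall>g \<in> Arr C. Cod C g = Dom C f \<longrightarrow> Comp C f g \<in> S)"

definition pullback_sieve :: "('o, 'm) cat \<Rightarrow> 'm \<Rightarrow> 'm set \<Rightarrow> 'm set" where
  "pullback_sieve C f S = {g \<in> Arr C. Cod C g = Dom C f \<and> Comp C f g \<in> S}"

definition grothendieck_topology :: "('o, 'm) cat \<Rightarrow> ('o \<Rightarrow> 'm set set) \<Rightarrow> bool" where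
  "grothendieck_topology C J \<longleftrightarrow>
     (\<forall>X \<in> Obj C. \<forall>S \<in> J X. sieve C X S) \<and>
     (\<forall>X \<in> Obj C. {f \<in> Arr C. Cod C f = X} \<in> J X) \<and>
     (\<forall>X \<in> Obj C. \<forall>S \<in> J X. \<forall>f \<in> Arr C. Cod C f = X \<longrightarrow>
        pullback_sieve C f S \<in> J (Dom C f)) \<and>
     (\<forall>X \<in> Obj C. \<forall>S \<in> J X. \<forall>R. sieve C X R \<longrightarrow>
        (\<forall>f \<in> S. pullback_sieve C f R \<in> J (Dom C f)) \<longrightarrow> R \<in> J X)"

definition pushforward_incl ::
  "('o, 'm) cat \<Rightarrow> ('o, 'm) cat \<Rightarrow> ('o \<Rightarrow> 'm set set) \<Rightarrow> 'o \<Rightarrow> 'm set set" where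
  "pushforward_incl C D J X =
     {R. sieve C X R \<and>
         (\<forall>Y \<in> Obj D. \<forall>f \<in> hom C Y X.
            {g \<in> Arr D. Cod D g = Y \<and> Comp C f g \<in> R} \<in> J Y)}"

definition presheaf :: "('o, 'm) cat \<Rightarrow> ('o \<Rightarrow> 'v set) \<Rightarrow> ('m \<Rightarrow> 'v \<Rightarrow> 'v) \<Rightarrow> bool" where
  "presheaf C G Gm \<longleftrightarrow>
     (\<forall>f \<in> Arr C. \<forall>x \<in> G (Cod C f). Gm f x \<in> G (Dom C f)) \<and>
     (\<forall>X \<in> Obj C. \<forall>x \<in> G X. Gm (Id C X) x = x) \<and>
     (\<forall>f \<in> Arr C. \<forall>g \<in> Arr C. Cod C f = Dom C g \<longrightarrow>
        (\<forall>x \<in> G (Cod C g). Gm (Comp C g f) x = Gm f (Gm g x)))"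

definition is_sheaf ::
  "('o, 'm) cat \<Rightarrow> ('o \<Rightarrow> 'm set set) \<Rightarrow> ('o \<Rightarrow> 'v set) \<Rightarrow> ('m \<Rightarrow> 'v \<Rightarrow> 'v) \<Rightarrow> bool" where
  "is_sheaf C J G Gm \<longleftrightarrow>
     (\<forall>X \<in> Obj C. \<forall>S \<in> J X. \<forall>x.
        ((\<forall>f \<in> S. x f \<in> G (Dom C f)) \<and>
         (\<forall>f \<in> S. \<forall>g \<in> Arr C. Cod C g = Dom C f \<longrightarrow> x (Comp C f g) = Gm g (x f)))
        \<longrightarrow> (\<exists>!s. s \<in> G X \<and> (\<forall>f \<in> S. Gm f s = x f)))"

end

theory Submission
  imports Defs
begin


locale fc =
  fixes F :: "('o, 'm) cat" and J :: "'o \<Rightarrow> 'm set set"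
    and G :: "'o \<Rightarrow> 'v set" and Gm :: "'m \<Rightarrow> 'v \<Rightarrow> 'v"
  assumes FC: "F_category F"
    and GT: "grothendieck_topology (connected_part F) J"
    and PS: "presheaf F G Gm"
begin

abbreviation cmp (infixl "\<cdot>" 70) where "f \<cdot> g \<equiv> Comp F f g"
abbreviation conn where "conn Y \<equiv> connected F Y"
abbreviation C where "C \<equiv> connected_part F"

lemma cat: "category F" using FC unfolding F_category_def by auto

lemma C_simps: "Obj C = {X. conn X}" "Arr C = {f \<in> Arr F. conn (Dom F f) \<and> conn (Cod F f)}"
  "Dom C = Dom F" "Cod C = Cod F" "Id C = Id F" "Comp C = Comp F"
  by (auto simp: connected_part_def full_sub_def connected_def)

lemma conn_obj: "conn Y \<Longrightarrow> Y \<in> Obj F" by (simp add: connected_def)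

lemma homI: "f \<in> Arr F \<Longrightarrow> f \<in> hom F (Dom F f) (Cod F f)" by (simp add: hom_def)
lemma homD: "f \<in> hom F X Y \<Longrightarrow> f \<in> Arr F \<and> Dom F f = X \<and> Cod F f = Y" by (simp add: hom_def)

lemma cat_ax:
  "\<forall>f \<in> Arr F. Dom F f \<in> Obj F \<and> Cod F f \<in> Obj F"
  "\<forall>X \<in> Obj F. Id F X \<in> hom F X X"
  "\<forall>f \<in> Arr F. \<forall>g \<in> Arr F. Cod F f = Dom F g \<longrightarrow> Comp F g f \<in> hom F (Dom F f) (Cod F g)"
  "\<forall>f \<in> Arr F. Comp F f (Id F (Dom F f)) = f \<and> Comp F (Id F (Cod F f)) f = f"
  "\<forall>f \<in> Arr F. \<forall>g \<in> Arr F. \<forall>h \<in> Arr F.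
        Cod F f = Dom F g \<longrightarrow> Cod F g = Dom F h \<longrightarrow>
        Comp F h (Comp F g f) = Comp F (Comp F h g) f"
  using cat unfolding category_def by blast+

lemma dom_obj: "f \<in> Arr F \<Longrightarrow> Dom F f \<in> Obj F" and cod_obj: "f \<in> Arr F \<Longrightarrow> Cod F f \<in> Obj F"
  using cat_ax(1) by auto

lemma id_hom: "X \<in> Obj F \<Longrightarrow> Id F X \<in> hom F X X" using cat_ax(2) by auto

lemma comp_arr: "f \<in> Arr F \<Longrightarrow> g \<in> Arr F \<Longrightarrow> Cod F f = Dom F g \<Longrightarrow>
   g \<cdot> f \<in> Arr F \<and> Dom F (g \<cdot> f) = Dom F f \<and> Cod F (g \<cdot> f) = Cod F g"
  using cat_ax(3) unfolding hom_def by blast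

lemma comp_hom: "f \<in> hom F X Y \<Longrightarrow> g \<in> hom F Y Z \<Longrightarrow> g \<cdot> f \<in> hom F X Z"
  using comp_arr unfolding hom_def by auto

lemma id_l: "f \<in> Arr F \<Longrightarrow> Id F (Cod F f) \<cdot> f = f" and id_r: "f \<in> Arr F \<Longrightarrow> f \<cdot> Id F (Dom F f) = f"
  using cat_ax(4) by auto

lemma assoc: "f \<in> Arr F \<Longrightarrow> g \<in> Arr F \<Longrightarrow> h \<in> Arr F \<Longrightarrow> Cod F f = Dom F g \<Longrightarrow> Cod F g = Dom F h \<Longrightarrow>
  h \<cdot> (g \<cdot> f) = (h \<cdot> g) \<cdot> f"
  using cat_ax(5) by blast

lemma Gm_in: "f \<in> Arr F \<Longrightarrow> x \<in> G (Cod F f) \<Longrightarrow> Gm f x \<in> G (Dom F f)"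
  using PS unfolding presheaf_def by blast
lemma Gm_id: "X \<in> Obj F \<Longrightarrow> x \<in> G X \<Longrightarrow> Gm (Id F X) x = x"
  using PS unfolding presheaf_def by blast
lemma Gm_comp: "f \<in> Arr F \<Longrightarrow> g \<in> Arr F \<Longrightarrow> Cod F f = Dom F g \<Longrightarrow> x \<in> G (Cod F g) \<Longrightarrow>
  Gm (g \<cdot> f) x = Gm f (Gm g x)"
  using PS unfolding presheaf_def by blast

lemma J_sieve: "conn X \<Longrightarrow> S \<in> J X \<Longrightarrow> sieve C X S" using GT unfolding grothendieck_topology_def by (simp only: C_simps) blast
lemma J_max: "conn X \<Longrightarrow> {f \<in> Arr C. Cod F f = X} \<in> J X" using GT unfolding grothendieck_topology_def by (simp only: C_simps) blast
lemma J_pull: "conn X \<Longrightarrow> S \<in> J X \<Longrightarrow> f \<in> Arr C \<Longrightarrow> Cod F f = X \<Longrightarrow> pullback_sieve C f S \<in> J (Dom F f)"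
  using GT unfolding grothendieck_topology_def by (simp only: C_simps) blast
lemma J_trans: "conn X \<Longrightarrow> S \<in> J X \<Longrightarrow> sieve C X R \<Longrightarrow> (\<forall>f \<in> S. pullback_sieve C f R \<in> J (Dom F f)) \<Longrightarrow> R \<in> J X"
  using GT unfolding grothendieck_topology_def by (simp only: C_simps) blast

lemma J_up: assumes "conn X" "S \<in> J X" "sieve C X R" "S \<subseteq> R" shows "R \<in> J X"
proof (rule J_trans[OF assms(1,2,3)], intro ballI)
  fix f assume f: "f \<in> S"
  have sv: "sieve C X S" using J_sieve assms by auto
  have fa: "f \<in> Arr C" "Cod F f = X" using sv f unfolding sieve_def C_simps(4) by auto
  have "pullback_sieve C f R = {g \<in> Arr C. Cod F g = Dom F f}"
    using sv f assms(4) unfolding pullback_sieve_def sieve_def C_simps(3,4,6) by auto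
  moreover have "conn (Dom F f)" using fa(1) by (simp add: C_simps)
  ultimately show "pullback_sieve C f R \<in> J (Dom F f)" using J_max by auto
qed

lemma conn_arr: "f \<in> hom F Y X \<Longrightarrow> conn Y \<Longrightarrow> conn X \<Longrightarrow> f \<in> Arr C"
  by (simp add: hom_def C_simps)

lemma conn_dec:
  assumes "conn Y" "is_coproduct F n N S \<iota>" "h \<in> hom F Y S"
  shows "\<exists>i<n. \<exists>g \<in> hom F Y (N i). h = \<iota> i \<cdot> g"
proof -
  have "bij_betw (\<lambda>(i, g). \<iota> i \<cdot> g) (SIGMA i:{..<n}. hom F Y (N i)) (hom F Y S)"
    using assms(1,2) unfolding connected_def by blast
  then have "h \<in> (\<lambda>(i, g). \<iota> i \<cdot> g) ` (SIGMA i:{..<n}. hom F Y (N i))" using assms(3) by (simp add: bij_betw_def)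
  then show ?thesis by auto
qed

lemma conn_uniq:
  assumes "conn Y" "is_coproduct F n N S \<iota>" "i < n" "j < n" "g \<in> hom F Y (N i)" "g' \<in> hom F Y (N j)"
    "\<iota> i \<cdot> g = \<iota> j \<cdot> g'"
  shows "i = j \<and> g = g'"
proof -
  have "bij_betw (\<lambda>(i, g). \<iota> i \<cdot> g) (SIGMA i:{..<n}. hom F Y (N i)) (hom F Y S)"
    using assms(1,2) unfolding connected_def by blast
  then have "inj_on (\<lambda>(i, g). \<iota> i \<cdot> g) (SIGMA i:{..<n}. hom F Y (N i))" by (simp add: bij_betw_def)
  moreover have "(i, g) \<in> (SIGMA i:{..<n}. hom F Y (N i))" "(j, g') \<in> (SIGMA i:{..<n}. hom F Y (N i))"
    using assms by auto
  ultimately have "(i, g) = (j, g')" using assms(7) by (metis (no_types, lifting) case_prod_conv inj_onD)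
  then show ?thesis by simp
qed

lemma decomp: assumes "X \<in> Obj F"
  obtains n N S \<iota> \<phi> \<psi> where "\<forall>i<n. conn (N i)" "is_coproduct F n N S \<iota>" "\<phi> \<in> hom F X S" "\<psi> \<in> hom F S X"
     "\<psi> \<cdot> \<phi> = Id F X" "\<phi> \<cdot> \<psi> = Id F S"
proof -
  obtain n N S \<iota> where a: "\<forall>i<n. conn (N i)" "is_coproduct F n N S \<iota>" "isomorphic F X S"
  proof -
    have "\<forall>X \<in> Obj F. \<exists>n N S \<iota>. (\<forall>i<n. conn (N i)) \<and>
        is_coproduct F n N S \<iota> \<and> isomorphic F X S" using FC unfolding F_category_def by simp
    then have "\<exists>n N S \<iota>. (\<forall>i<n. conn (N i)) \<and> is_coproduct F n N S \<iota> \<and> isomorphic F X S" using assms by blast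
    then show ?thesis using that by blast
  qed
  then obtain \<phi> where p: "\<phi> \<in> hom F X S" "is_iso F \<phi>" unfolding isomorphic_def by blast
  then obtain \<psi> where "\<psi> \<in> hom F S X" "\<psi> \<cdot> \<phi> = Id F X" "\<phi> \<cdot> \<psi> = Id F S"
    unfolding is_iso_def hom_def by auto
  then show ?thesis using a p that by blast
qed


lemma pf_iff: "R \<in> pushforward_incl F C J X \<longleftrightarrow> sieve F X R \<and>
   (\<forall>Y. conn Y \<longrightarrow> (\<forall>h \<in> hom F Y X. {g \<in> Arr C. Cod F g = Y \<and> h \<cdot> g \<in> R} \<in> J Y))"
  unfolding pushforward_incl_def by (simp add: C_simps(1,4))

lemma arrC_iff: "g \<in> Arr C \<longleftrightarrow> g \<in> Arr F \<and> conn (Dom F g) \<and> conn (Cod F g)"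
  by (simp add: C_simps)

lemma cov:
  assumes X: "X \<in> Obj F" and sv: "sieve F X R"
    and c: "\<And>Y h. conn Y \<Longrightarrow> h \<in> hom F Y X \<Longrightarrow> \<exists>S \<in> J Y. S \<subseteq> {g \<in> Arr C. Cod F g = Y \<and> h \<cdot> g \<in> R}"
  shows "R \<in> pushforward_incl F C J X"
proof -
  have "\<forall>Y. conn Y \<longrightarrow> (\<forall>h \<in> hom F Y X. {g \<in> Arr C. Cod F g = Y \<and> h \<cdot> g \<in> R} \<in> J Y)"
proof (intro allI impI ballI)
  fix Y h assume Y: "conn Y" and h: "h \<in> hom F Y X"
  obtain S where S: "S \<in> J Y" "S \<subseteq> {g \<in> Arr C. Cod F g = Y \<and> h \<cdot> g \<in> R}" using c[OF Y h] by blast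
  have "sieve C Y {g \<in> Arr C. Cod F g = Y \<and> h \<cdot> g \<in> R}"
    unfolding sieve_def C_simps(3,4,6)
  proof (intro conjI ballI impI)
    show "{g \<in> Arr C. Cod F g = Y \<and> h \<cdot> g \<in> R} \<subseteq> {f \<in> Arr C. Cod F f = Y}" by blast
  next
    fix f g assume f: "f \<in> {g \<in> Arr C. Cod F g = Y \<and> h \<cdot> g \<in> R}" and g: "g \<in> Arr C" "Cod F g = Dom F f"
    have fa: "f \<in> Arr F" "conn (Dom F f)" "Cod F f = Y" "h \<cdot> f \<in> R" using f arrC_iff by auto
    have ga: "g \<in> Arr F" "conn (Dom F g)" using g arrC_iff by auto
    have ha: "h \<in> Arr F" "Dom F h = Y" "Cod F h = X" using h homD by auto
    have fg: "f \<cdot> g \<in> Arr F" "Dom F (f \<cdot> g) = Dom F g" "Cod F (f \<cdot> g) = Y"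
      using comp_arr[OF ga(1) fa(1) g(2)] fa by auto
    have hf: "Dom F (h \<cdot> f) = Dom F f" using comp_arr[OF fa(1) ha(1)] fa ha by auto
    have "(h \<cdot> f) \<cdot> g \<in> R" using sv fa(4) ga g(2) hf unfolding sieve_def by auto
    moreover have "h \<cdot> (f \<cdot> g) = (h \<cdot> f) \<cdot> g" using assoc[OF ga(1) fa(1) ha(1)] g fa ha by simp
    ultimately show "f \<cdot> g \<in> {g \<in> Arr C. Cod F g = Y \<and> h \<cdot> g \<in> R}"
      using fg ga Y arrC_iff by auto
  qed
  then show "{g \<in> Arr C. Cod F g = Y \<and> h \<cdot> g \<in> R} \<in> J Y" using J_up[OF Y S(1)] S(2) by blast
qed
  then show ?thesis unfolding pf_iff using sv by blast
qed

lemma coprod_facts: assumes "is_coproduct F n N S \<iota>"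
  shows "S \<in> Obj F" "\<And>i. i < n \<Longrightarrow> N i \<in> Obj F" "\<And>i. i < n \<Longrightarrow> \<iota> i \<in> hom F (N i) S"
  using assms unfolding is_coproduct_def by blast+

lemma hom_arr: "f \<in> hom F X Y \<Longrightarrow> f \<in> Arr F" and hom_dom: "f \<in> hom F X Y \<Longrightarrow> Dom F f = X"
  and hom_cod: "f \<in> hom F X Y \<Longrightarrow> Cod F f = Y"
  by (simp_all add: hom_def)

end

locale fc_lhs = fc +
  assumes SH: "is_sheaf F (pushforward_incl F (connected_part F) J) G Gm"
begin

lemma sheaf_use:
  assumes "X \<in> Obj F" "R \<in> pushforward_incl F C J X"
    "\<forall>f \<in> R. x f \<in> G (Dom F f)"
    "\<forall>f \<in> R. \<forall>g \<in> Arr F. Cod F g = Dom F f \<longrightarrow> x (f \<cdot> g) = Gm g (x f)"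
  shows "\<exists>!s. s \<in> G X \<and> (\<forall>f \<in> R. Gm f s = x f)"
proof -
  have "\<forall>x. ((\<forall>f \<in> R. x f \<in> G (Dom F f)) \<and>
         (\<forall>f \<in> R. \<forall>g \<in> Arr F. Cod F g = Dom F f \<longrightarrow> x (f \<cdot> g) = Gm g (x f)))
        \<longrightarrow> (\<exists>!s. s \<in> G X \<and> (\<forall>f \<in> R. Gm f s = x f))"
    using bspec[OF bspec[OF SH[unfolded is_sheaf_def] assms(1)] assms(2)] .
  then show ?thesis using assms(3,4) by blast
qed

lemma sep':
  assumes X: "X \<in> Obj F" and v: "v \<in> G X" and w: "w \<in> G X"
    and c: "\<And>Y h. conn Y \<Longrightarrow> h \<in> hom F Y X \<Longrightarrow> \<exists>S \<in> J Y. \<forall>g \<in> S. g \<in> Arr C \<and> Cod F g = Y \<and> Gm (h \<cdot> g) v = Gm (h \<cdot> g) w"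
  shows "v = w"
proof -
  define R where "R = {f \<in> Arr F. Cod F f = X \<and> Gm f v = Gm f w}"
  have sv: "sieve F X R" unfolding sieve_def
  proof (intro conjI ballI impI)
    show "R \<subseteq> {f \<in> Arr F. Cod F f = X}" unfolding R_def by blast
  next
    fix f g assume f: "f \<in> R" and g: "g \<in> Arr F" "Cod F g = Dom F f"
    have fa: "f \<in> Arr F" "Cod F f = X" "Gm f v = Gm f w" using f R_def by auto
    show "f \<cdot> g \<in> R" unfolding R_def using comp_arr[OF g(1) fa(1) g(2)] Gm_comp[OF g(1) fa(1) g(2)] fa v w by auto
  qed
  have cv: "R \<in> pushforward_incl F C J X"
  proof (rule cov[OF X sv])
    fix Y h assume Y: "conn Y" and h: "h \<in> hom F Y X"
    obtain S where S: "S \<in> J Y" "\<forall>g \<in> S. g \<in> Arr C \<and> Cod F g = Y \<and> Gm (h \<cdot> g) v = Gm (h \<cdot> g) w"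
      using c[OF Y h] by blast
    have "S \<subseteq> {g \<in> Arr C. Cod F g = Y \<and> h \<cdot> g \<in> R}"
    proof
      fix g assume g: "g \<in> S"
      then have "g \<in> Arr F" "Cod F g = Dom F h" using S(2) h homD arrC_iff by auto
      then show "g \<in> {g \<in> Arr C. Cod F g = Y \<and> h \<cdot> g \<in> R}"
        using comp_arr[of g h] h homD S(2) g unfolding R_def by auto
    qed
    then show "\<exists>S \<in> J Y. S \<subseteq> {g \<in> Arr C. Cod F g = Y \<and> h \<cdot> g \<in> R}" using S(1) by blast
  qed
  have "\<exists>!s. s \<in> G X \<and> (\<forall>f \<in> R. Gm f s = Gm f v)"
  proof (rule sheaf_use[OF X cv])
    show "\<forall>f \<in> R. Gm f v \<in> G (Dom F f)"
    proof
      fix f assume "f \<in> R"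
      then have "f \<in> Arr F" "Cod F f = X" by (simp_all add: R_def)
      then show "Gm f v \<in> G (Dom F f)" using Gm_in[of f v] v by simp
    qed
    show "\<forall>f \<in> R. \<forall>g \<in> Arr F. Cod F g = Dom F f \<longrightarrow> Gm (f \<cdot> g) v = Gm g (Gm f v)"
    proof (intro ballI impI)
      fix f g assume "f \<in> R" "g \<in> Arr F" "Cod F g = Dom F f"
      moreover from \<open>f \<in> R\<close> have "f \<in> Arr F" "Cod F f = X" by (simp_all add: R_def)
      ultimately show "Gm (f \<cdot> g) v = Gm g (Gm f v)" using Gm_comp[of g f v] v by simp
    qed
  qed
  moreover have "v \<in> G X \<and> (\<forall>f \<in> R. Gm f v = Gm f v)" using v by simp
  moreover have "w \<in> G X \<and> (\<forall>f \<in> R. Gm f w = Gm f v)" using w unfolding R_def by auto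
  ultimately show ?thesis by blast
qed

lemma sep:
  assumes X: "X \<in> Obj F" and v: "v \<in> G X" and w: "w \<in> G X"
    and c: "\<And>W k. conn W \<Longrightarrow> k \<in> hom F W X \<Longrightarrow> Gm k v = Gm k w"
  shows "v = w"
proof (rule sep'[OF X v w])
  fix Y h assume Y: "conn Y" and h: "h \<in> hom F Y X"
  have "\<forall>g \<in> {f \<in> Arr C. Cod F f = Y}. g \<in> Arr C \<and> Cod F g = Y \<and> Gm (h \<cdot> g) v = Gm (h \<cdot> g) w"
  proof
    fix g assume g: "g \<in> {f \<in> Arr C. Cod F f = Y}"
    then have "g \<in> hom F (Dom F g) Y" "conn (Dom F g)" using arrC_iff homI by auto
    then show "g \<in> Arr C \<and> Cod F g = Y \<and> Gm (h \<cdot> g) v = Gm (h \<cdot> g) w"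
      using g c comp_hom[OF _ h] by auto
  qed
  then show "\<exists>S \<in> J Y. \<forall>g \<in> S. g \<in> Arr C \<and> Cod F g = Y \<and> Gm (h \<cdot> g) v = Gm (h \<cdot> g) w"
    using J_max[OF Y] by blast
qed


lemma glue:
  assumes X: "X \<in> Obj F"
    and T: "\<And>k. k \<in> T \<Longrightarrow> k \<in> Arr F \<and> Cod F k = X \<and> conn (Dom F k)"
    and Tcl: "\<And>k c. k \<in> T \<Longrightarrow> c \<in> Arr C \<Longrightarrow> Cod F c = Dom F k \<Longrightarrow> k \<cdot> c \<in> T"
    and yin: "\<And>k. k \<in> T \<Longrightarrow> y k \<in> G (Dom F k)"
    and ycp: "\<And>k c. k \<in> T \<Longrightarrow> c \<in> Arr C \<Longrightarrow> Cod F c = Dom F k \<Longrightarrow> y (k \<cdot> c) = Gm c (y k)"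
    and cv: "\<And>Y h. conn Y \<Longrightarrow> h \<in> hom F Y X \<Longrightarrow> {g \<in> Arr C. Cod F g = Y \<and> h \<cdot> g \<in> T} \<in> J Y"
  shows "\<exists>v \<in> G X. \<forall>k \<in> T. Gm k v = y k"
proof -
  define Q where "Q f u \<longleftrightarrow> u \<in> G (Dom F f) \<and> (\<forall>W k. conn W \<longrightarrow> k \<in> hom F W (Dom F f) \<longrightarrow>
      f \<cdot> k \<in> T \<and> Gm k u = y (f \<cdot> k))" for f u
  define R where "R = {f \<in> Arr F. Cod F f = X \<and> (\<exists>u. Q f u)}"
  have uniq: "u = u'" if f: "f \<in> Arr F" and q: "Q f u" "Q f u'" for f u u'
  proof (rule sep)
    show "Dom F f \<in> Obj F" using dom_obj f by blast
    show "u \<in> G (Dom F f)" "u' \<in> G (Dom F f)" using q Q_def by auto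
    fix W k assume "conn W" "k \<in> hom F W (Dom F f)"
    then show "Gm k u = Gm k u'" using q unfolding Q_def by metis
  qed
  have Qcomp: "Q (f \<cdot> g) (Gm g u)" if f: "f \<in> Arr F" and g: "g \<in> Arr F" "Cod F g = Dom F f" and q: "Q f u" for f g u
  proof -
    have fg: "Dom F (f \<cdot> g) = Dom F g" using comp_arr[OF g(1) f g(2)] by simp
    have "Gm g u \<in> G (Dom F g)" using Gm_in[OF g(1)] q g(2) unfolding Q_def by simp
    moreover have "f \<cdot> g \<cdot> k \<in> T \<and> Gm k (Gm g u) = y (f \<cdot> g \<cdot> k)"
      if W: "conn W" and k: "k \<in> hom F W (Dom F g)" for W k
    proof -
      have ka: "k \<in> Arr F" "Dom F k = W" "Cod F k = Dom F g" using k homD by auto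
      have "g \<in> hom F (Dom F g) (Dom F f)" using g homI by fastforce
      then have gk: "g \<cdot> k \<in> hom F W (Dom F f)" using comp_hom[OF k] by blast
      have e1: "f \<cdot> g \<cdot> k = f \<cdot> (g \<cdot> k)" using assoc[OF ka(1) g(1) f] ka g by simp
      have e2: "Gm k (Gm g u) = Gm (g \<cdot> k) u" using Gm_comp[OF ka(1) g(1) ka(3)] q g(2) unfolding Q_def by simp
      show ?thesis using q W gk e1 e2 unfolding Q_def by metis
    qed
    ultimately show ?thesis unfolding Q_def fg by blast
  qed
  have TR: "k \<in> R" and Qy: "Q k (y k)" if k: "k \<in> T" for k
  proof -
    have ka: "k \<in> Arr F" "Cod F k = X" "conn (Dom F k)" using T[OF k] by auto
    have "k \<cdot> c \<in> T \<and> Gm c (y k) = y (k \<cdot> c)" if W: "conn W" and c: "c \<in> hom F W (Dom F k)" for W c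
    proof -
      have "c \<in> Arr C" "Cod F c = Dom F k" using conn_arr[OF c W ka(3)] c homD by auto
      then show ?thesis using Tcl[OF k] ycp[OF k] by auto
    qed
    then show "Q k (y k)" unfolding Q_def using yin[OF k] by blast
    then show "k \<in> R" unfolding R_def using ka by blast
  qed
  have sv: "sieve F X R" unfolding sieve_def
  proof (intro conjI ballI impI)
    show "R \<subseteq> {f \<in> Arr F. Cod F f = X}" unfolding R_def by blast
  next
    fix f g assume f: "f \<in> R" and g: "g \<in> Arr F" "Cod F g = Dom F f"
    then obtain u where fa: "f \<in> Arr F" "Cod F f = X" "Q f u" unfolding R_def by blast
    show "f \<cdot> g \<in> R" unfolding R_def using comp_arr[OF g(1) fa(1) g(2)] Qcomp[OF fa(1) g fa(3)] fa by auto
  qed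
  have cvR: "R \<in> pushforward_incl F C J X"
  proof (rule cov[OF X sv])
    fix Y h assume Y: "conn Y" and h: "h \<in> hom F Y X"
    have "{g \<in> Arr C. Cod F g = Y \<and> h \<cdot> g \<in> T} \<subseteq> {g \<in> Arr C. Cod F g = Y \<and> h \<cdot> g \<in> R}"
      using TR by blast
    then show "\<exists>S \<in> J Y. S \<subseteq> {g \<in> Arr C. Cod F g = Y \<and> h \<cdot> g \<in> R}" using cv[OF Y h] by blast
  qed
  define x where "x f = (THE u. Q f u)" for f
  have Qx: "Q f (x f)" if f: "f \<in> R" for f
  proof -
    obtain u where fa: "f \<in> Arr F" "Q f u" using f unfolding R_def by blast
    have "x f = u" unfolding x_def using uniq[OF fa(1)] fa(2) by blast
    then show ?thesis using fa by simp
  qed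
  have "\<exists>!s. s \<in> G X \<and> (\<forall>f \<in> R. Gm f s = x f)"
  proof (rule sheaf_use[OF X cvR])
    show "\<forall>f \<in> R. x f \<in> G (Dom F f)" using Qx unfolding Q_def by blast
    show "\<forall>f \<in> R. \<forall>g \<in> Arr F. Cod F g = Dom F f \<longrightarrow> x (f \<cdot> g) = Gm g (x f)"
    proof (intro ballI impI)
      fix f g assume f: "f \<in> R" and g: "g \<in> Arr F" "Cod F g = Dom F f"
      have fa: "f \<in> Arr F" using f unfolding R_def by blast
      have fgR: "f \<cdot> g \<in> R" using sv f g unfolding sieve_def by blast
      have fgA: "f \<cdot> g \<in> Arr F" using comp_arr[OF g(1) fa g(2)] by simp
      show "x (f \<cdot> g) = Gm g (x f)" using uniq[OF fgA Qx[OF fgR] Qcomp[OF fa g Qx[OF f]]] .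
    qed
  qed
  then obtain v where v: "v \<in> G X" "\<forall>f \<in> R. Gm f v = x f" by blast
  have "\<forall>k \<in> T. Gm k v = y k"
  proof
    fix k assume k: "k \<in> T"
    have "x k = y k" using uniq[of k] Qx[OF TR[OF k]] Qy[OF k] T[OF k] by blast
    then show "Gm k v = y k" using v TR[OF k] by simp
  qed
  then show ?thesis using v by blast
qed


lemma lhs_c:
  assumes cp: "is_coproduct F n N S \<iota>"
  shows "bij_betw (\<lambda>v. \<lambda>i\<in>{..<n}. Gm (\<iota> i) v) (G S) (\<Pi>\<^sub>E i\<in>{..<n}. G (N i))"
proof -
  note cf = coprod_facts[OF cp]
  have rest: "Gm (\<iota> i) v = Gm (\<iota> i) w" if "(\<lambda>i\<in>{..<n}. Gm (\<iota> i) v) = (\<lambda>i\<in>{..<n}. Gm (\<iota> i) w)" "i < n" for v w i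
    using fun_cong[OF that(1), of i] that(2) by simp
  have inj: "inj_on (\<lambda>v. \<lambda>i\<in>{..<n}. Gm (\<iota> i) v) (G S)"
  proof (rule inj_onI)
    fix v w assume v: "v \<in> G S" and w: "w \<in> G S" and e: "(\<lambda>i\<in>{..<n}. Gm (\<iota> i) v) = (\<lambda>i\<in>{..<n}. Gm (\<iota> i) w)"
    show "v = w"
    proof (rule sep[OF cf(1) v w])
      fix W k assume W: "conn W" and k: "k \<in> hom F W S"
      obtain i g where ig: "i < n" "g \<in> hom F W (N i)" "k = \<iota> i \<cdot> g" using conn_dec[OF W cp k] by blast
      have "Gm k v = Gm g (Gm (\<iota> i) v)" "Gm k w = Gm g (Gm (\<iota> i) w)"
        using ig Gm_comp[of g "\<iota> i"] hom_arr hom_dom hom_cod cf(3)[OF ig(1)] v w by auto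
      then show "Gm k v = Gm k w" using rest[OF e ig(1)] by simp
    qed
  qed
  have sub: "(\<lambda>v. \<lambda>i\<in>{..<n}. Gm (\<iota> i) v) ` G S \<subseteq> (\<Pi>\<^sub>E i\<in>{..<n}. G (N i))"
  proof
    fix z assume "z \<in> (\<lambda>v. \<lambda>i\<in>{..<n}. Gm (\<iota> i) v) ` G S"
    then obtain v where v: "v \<in> G S" "z = (\<lambda>i\<in>{..<n}. Gm (\<iota> i) v)" by blast
    have "Gm (\<iota> i) v \<in> G (N i)" if "i < n" for i
      using Gm_in[of "\<iota> i" v] cf(3)[OF that] hom_arr hom_dom hom_cod v by auto
    then show "z \<in> (\<Pi>\<^sub>E i\<in>{..<n}. G (N i))" using v by auto
  qed
  have sup: "t \<in> (\<lambda>v. \<lambda>i\<in>{..<n}. Gm (\<iota> i) v) ` G S" if t: "t \<in> (\<Pi>\<^sub>E i\<in>{..<n}. G (N i))" for t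
  proof -
    define P where "P k p \<longleftrightarrow> fst p < n \<and> snd p \<in> hom F (Dom F k) (N (fst p)) \<and> k = \<iota> (fst p) \<cdot> snd p" for k p
    define y where "y k = Gm (snd (SOME p. P k p)) (t (fst (SOME p. P k p)))" for k
    have yeq: "y k = Gm g (t i)" if W: "conn W" and k: "k \<in> hom F W S" and i: "i < n"
      and g: "g \<in> hom F W (N i)" and e: "k = \<iota> i \<cdot> g" for W k i g
    proof -
      have dk: "Dom F k = W" using k hom_dom by blast
      have "P k (i, g)" unfolding P_def using i g e dk by simp
      then have "P k (SOME p. P k p)" by (rule someI)
      then have p: "fst (SOME p. P k p) < n" "snd (SOME p. P k p) \<in> hom F W (N (fst (SOME p. P k p)))"
        "k = \<iota> (fst (SOME p. P k p)) \<cdot> snd (SOME p. P k p)" unfolding P_def dk by auto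
      have "\<iota> (fst (SOME p. P k p)) \<cdot> snd (SOME p. P k p) = \<iota> i \<cdot> g" using p(3) e by simp
      then have "fst (SOME p. P k p) = i \<and> snd (SOME p. P k p) = g"
        using conn_uniq[OF W cp p(1) i p(2) g] by blast
      then show ?thesis unfolding y_def by simp
    qed
    define T where "T = {k \<in> Arr F. Cod F k = S \<and> conn (Dom F k)}"
    have "\<exists>v \<in> G S. \<forall>k \<in> T. Gm k v = y k"
    proof (rule glue[OF cf(1)])
      show "k \<in> Arr F \<and> Cod F k = S \<and> conn (Dom F k)" if "k \<in> T" for k using that T_def by blast
      show "k \<cdot> c \<in> T" if k: "k \<in> T" and c: "c \<in> Arr C" "Cod F c = Dom F k" for k c
      proof -
        have "c \<in> Arr F" "conn (Dom F c)" using c arrC_iff by auto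
        then show ?thesis using comp_arr[of c k] k c T_def by auto
      qed
      show "y k \<in> G (Dom F k)" if k: "k \<in> T" for k
      proof -
        have ka: "k \<in> hom F (Dom F k) S" "conn (Dom F k)" using k T_def homI by auto
        obtain i g where ig: "i < n" "g \<in> hom F (Dom F k) (N i)" "k = \<iota> i \<cdot> g" using conn_dec[OF ka(2) cp ka(1)] by blast
        have "t i \<in> G (N i)" using t ig(1) by auto
        then have "Gm g (t i) \<in> G (Dom F k)" using Gm_in[of g "t i"] ig(2) hom_arr hom_dom hom_cod by auto
        then show ?thesis using yeq[OF ka(2) ka(1) ig] by simp
      qed
      show "y (k \<cdot> c) = Gm c (y k)" if k: "k \<in> T" and c: "c \<in> Arr C" "Cod F c = Dom F k" for k c
      proof -
        have ka: "k \<in> hom F (Dom F k) S" "conn (Dom F k)" using k T_def homI by auto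
        obtain i g where ig: "i < n" "g \<in> hom F (Dom F k) (N i)" "k = \<iota> i \<cdot> g" using conn_dec[OF ka(2) cp ka(1)] by blast
        have ca: "c \<in> Arr F" "conn (Dom F c)" using c arrC_iff by auto
        have ch: "c \<in> hom F (Dom F c) (Dom F k)" using ca c homI by fastforce
        have gc: "g \<cdot> c \<in> hom F (Dom F c) (N i)" using comp_hom[OF ch ig(2)] .
        have kc: "k \<cdot> c \<in> hom F (Dom F c) S" using comp_hom[OF ch ka(1)] .
        have e: "k \<cdot> c = \<iota> i \<cdot> (g \<cdot> c)"
          using ig(3) assoc[of c g "\<iota> i"] ca ch ig(2) cf(3)[OF ig(1)] hom_arr hom_dom hom_cod by metis
        have ti: "t i \<in> G (N i)" using t ig(1) by auto
        have "y (k \<cdot> c) = Gm (g \<cdot> c) (t i)" using yeq[OF ca(2) kc ig(1) gc e] .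
        also have "\<dots> = Gm c (Gm g (t i))" using Gm_comp[of c g "t i"] ca ch ig(2) ti hom_arr hom_dom hom_cod by metis
        also have "\<dots> = Gm c (y k)" using yeq[OF ka(2) ka(1) ig] by simp
        finally show ?thesis .
      qed
      show "{g \<in> Arr C. Cod F g = Y \<and> h \<cdot> g \<in> T} \<in> J Y" if Y: "conn Y" and h: "h \<in> hom F Y S" for Y h
      proof -
        have "{g \<in> Arr C. Cod F g = Y \<and> h \<cdot> g \<in> T} = {g \<in> Arr C. Cod F g = Y}"
        proof (intro equalityI subsetI)
          fix g assume "g \<in> {g \<in> Arr C. Cod F g = Y}"
          then have g: "g \<in> Arr F" "conn (Dom F g)" "Cod F g = Y" "g \<in> Arr C" using arrC_iff by auto
          have "h \<cdot> g \<in> T" using comp_arr[of g h] g h hom_arr hom_dom hom_cod unfolding T_def by auto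
          then show "g \<in> {g \<in> Arr C. Cod F g = Y \<and> h \<cdot> g \<in> T}" using g by blast
        qed blast
        then show ?thesis using J_max[OF Y] by simp
      qed
    qed
    then obtain v where v: "v \<in> G S" "\<forall>k \<in> T. Gm k v = y k" by blast
    have "(\<lambda>i\<in>{..<n}. Gm (\<iota> i) v) = t"
    proof
      fix i show "(\<lambda>i\<in>{..<n}. Gm (\<iota> i) v) i = t i"
      proof (cases "i < n")
        case False then show ?thesis using t by (auto simp: PiE_def extensional_def)
      next
        case i: True
        have ii: "\<iota> i \<in> hom F (N i) S" using cf(3)[OF i] .
        have ti: "t i \<in> G (N i)" using t i by auto
        have "Gm (\<iota> i) v = t i"
        proof (rule sep[OF cf(2)[OF i]])
          show "Gm (\<iota> i) v \<in> G (N i)" using Gm_in[of "\<iota> i" v] ii v hom_arr hom_dom hom_cod by auto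
          show "t i \<in> G (N i)" by (rule ti)
          fix W k assume W: "conn W" and k: "k \<in> hom F W (N i)"
          have ik: "\<iota> i \<cdot> k \<in> hom F W S" using comp_hom[OF k ii] .
          have ikT: "\<iota> i \<cdot> k \<in> T" using ik W hom_arr hom_dom hom_cod unfolding T_def by auto
          have c1: "Cod F k = Dom F (\<iota> i)" using hom_cod[OF k] hom_dom[OF ii] by simp
          have c2: "v \<in> G (Cod F (\<iota> i))" using hom_cod[OF ii] v by simp
          have "Gm k (Gm (\<iota> i) v) = Gm (\<iota> i \<cdot> k) v"
            using Gm_comp[OF hom_arr[OF k] hom_arr[OF ii] c1 c2] by simp
          also have "\<dots> = y (\<iota> i \<cdot> k)" using v ikT by blast
          also have "\<dots> = Gm k (t i)" using yeq[OF W ik i k refl] .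
          finally show "Gm k (Gm (\<iota> i) v) = Gm k (t i)" .
        qed
        then show ?thesis using i by simp
      qed
    qed
    then show ?thesis using v by blast
  qed
  show ?thesis unfolding bij_betw_def using inj sub sup by blast
qed


lemma lhs_b:
  assumes Z: "is_initial F Z" shows "\<exists>v. G Z = {v}"
proof -
  have cp: "is_coproduct F 0 (\<lambda>_. Z) Z (\<lambda>_. undefined)"
    using Z unfolding is_coproduct_def is_initial_def by simp
  note b = lhs_c[OF cp]
  have "(\<Pi>\<^sub>E i\<in>{..<0::nat}. G Z) \<noteq> {}" by simp
  then obtain v where v: "v \<in> G Z" using b unfolding bij_betw_def by blast
  have "w = v" if w: "w \<in> G Z" for w
  proof -
    have "(\<lambda>i\<in>{..<0::nat}. Gm ((\<lambda>_. undefined) i) w) = (\<lambda>i\<in>{..<0::nat}. Gm ((\<lambda>_. undefined) i) v)"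
      by (simp add: fun_eq_iff)
    then show ?thesis using inj_onD[OF bij_betw_imp_inj_on[OF b]] v w by blast
  qed
  then have "G Z = {v}" using v by blast
  then show ?thesis by blast
qed

lemma lhs_a: "is_sheaf C J G Gm"
  unfolding is_sheaf_def C_simps(1,3,4,6)
proof (intro ballI allI impI)
  fix X S x
  assume X: "X \<in> {X. conn X}" and S: "S \<in> J X"
    and hx: "(\<forall>f\<in>S. x f \<in> G (Dom F f)) \<and> (\<forall>f\<in>S. \<forall>g\<in>Arr C. Cod F g = Dom F f \<longrightarrow> x (f \<cdot> g) = Gm g (x f))"
  have cX: "conn X" using X by simp
  have XO: "X \<in> Obj F" using conn_obj[OF cX] .
  have sv: "S \<subseteq> {f \<in> Arr C. Cod F f = X}" "\<forall>f\<in>S. \<forall>g\<in>Arr C. Cod F g = Dom F f \<longrightarrow> f \<cdot> g \<in> S"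
    using J_sieve[OF cX S] unfolding sieve_def C_simps(3,4,6) by auto
  have pb: "{g \<in> Arr C. Cod F g = Y \<and> h \<cdot> g \<in> S} = pullback_sieve C h S" "pullback_sieve C h S \<in> J Y"
    if Y: "conn Y" and h: "h \<in> hom F Y X" for Y h
  proof -
    have hC: "h \<in> Arr C" using conn_arr[OF h Y cX] .
    show "{g \<in> Arr C. Cod F g = Y \<and> h \<cdot> g \<in> S} = pullback_sieve C h S"
      unfolding pullback_sieve_def C_simps(3,4,6) using hom_dom[OF h] by simp
    show "pullback_sieve C h S \<in> J Y" using J_pull[OF cX S hC] hom_dom[OF h] hom_cod[OF h] by simp
  qed
  have ex: "\<exists>v \<in> G X. \<forall>k \<in> S. Gm k v = x k"
  proof (rule glue[OF XO])
    show "k \<in> Arr F \<and> Cod F k = X \<and> conn (Dom F k)" if "k \<in> S" for k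
      using that sv(1) arrC_iff by auto
    show "k \<cdot> c \<in> S" if "k \<in> S" "c \<in> Arr C" "Cod F c = Dom F k" for k c using that sv(2) by blast
    show "x k \<in> G (Dom F k)" if "k \<in> S" for k using that hx by blast
    show "x (k \<cdot> c) = Gm c (x k)" if "k \<in> S" "c \<in> Arr C" "Cod F c = Dom F k" for k c using that hx by blast
    show "{g \<in> Arr C. Cod F g = Y \<and> h \<cdot> g \<in> S} \<in> J Y" if "conn Y" "h \<in> hom F Y X" for Y h
      using pb[OF that] by simp
  qed
  have un: "s = s'" if s: "s \<in> G X" "\<forall>f \<in> S. Gm f s = x f" and s': "s' \<in> G X" "\<forall>f \<in> S. Gm f s' = x f" for s s'
  proof (rule sep'[OF XO s(1) s'(1)])
    fix Y h assume Y: "conn Y" and h: "h \<in> hom F Y X"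
    have "\<forall>g \<in> pullback_sieve C h S. g \<in> Arr C \<and> Cod F g = Y \<and> Gm (h \<cdot> g) s = Gm (h \<cdot> g) s'"
      using pb(1)[OF Y h, symmetric] s(2) s'(2) by auto
    then show "\<exists>S \<in> J Y. \<forall>g \<in> S. g \<in> Arr C \<and> Cod F g = Y \<and> Gm (h \<cdot> g) s = Gm (h \<cdot> g) s'"
      using pb(2)[OF Y h] by blast
  qed
  show "\<exists>!s. s \<in> G X \<and> (\<forall>f\<in>S. Gm f s = x f)" using ex un by blast
qed


end

locale fc_rhs = fc +
  assumes SC: "is_sheaf (connected_part F) J G Gm"
    and CP: "\<And>n N S \<iota>. is_coproduct F n N S \<iota> \<Longrightarrow>
       bij_betw (\<lambda>v. \<lambda>i\<in>{..<n}. Gm (\<iota> i) v) (G S) (\<Pi>\<^sub>E i\<in>{..<n}. G (N i))"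
begin

lemma csheaf_use:
  assumes Y: "conn Y" and S: "S \<in> J Y"
    and a: "\<forall>f \<in> S. x f \<in> G (Dom F f)"
    and b: "\<forall>f \<in> S. \<forall>g \<in> Arr C. Cod F g = Dom F f \<longrightarrow> x (f \<cdot> g) = Gm g (x f)"
  shows "\<exists>!s. s \<in> G Y \<and> (\<forall>f \<in> S. Gm f s = x f)"
proof -
  note sh = SC[unfolded is_sheaf_def C_simps(1,3,4,6)]
  have Y': "Y \<in> {X. conn X}" using Y by simp
  have "\<forall>x. ((\<forall>f \<in> S. x f \<in> G (Dom F f)) \<and>
         (\<forall>f \<in> S. \<forall>g \<in> Arr C. Cod F g = Dom F f \<longrightarrow> x (f \<cdot> g) = Gm g (x f)))
        \<longrightarrow> (\<exists>!s. s \<in> G Y \<and> (\<forall>f \<in> S. Gm f s = x f))"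
    using bspec[OF bspec[OF sh Y'] S] .
  then show ?thesis using a b by blast
qed

lemma rsep:
  assumes X: "X \<in> Obj F" and v: "v \<in> G X" and w: "w \<in> G X"
    and c: "\<And>W k. conn W \<Longrightarrow> k \<in> hom F W X \<Longrightarrow> Gm k v = Gm k w"
  shows "v = w"
proof -
  obtain n N S \<iota> \<phi> \<psi> where d: "\<forall>i<n. conn (N i)" "is_coproduct F n N S \<iota>" "\<phi> \<in> hom F X S" "\<psi> \<in> hom F S X"
     "\<psi> \<cdot> \<phi> = Id F X" "\<phi> \<cdot> \<psi> = Id F S" using decomp[OF X] by blast
  note cf = coprod_facts[OF d(2)]
  have pv: "Gm \<psi> v \<in> G S" "Gm \<psi> w \<in> G S"
    using Gm_in[OF hom_arr[OF d(4)]] hom_dom[OF d(4)] hom_cod[OF d(4)] v w by auto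
  have comp_i: "Gm (\<iota> i) (Gm \<psi> z) = Gm (\<psi> \<cdot> \<iota> i) z" if i: "i < n" and z: "z \<in> G X" for i z
  proof -
    have c1: "Cod F (\<iota> i) = Dom F \<psi>" using hom_cod[OF cf(3)[OF i]] hom_dom[OF d(4)] by simp
    have c2: "z \<in> G (Cod F \<psi>)" using hom_cod[OF d(4)] z by simp
    show ?thesis using Gm_comp[OF hom_arr[OF cf(3)[OF i]] hom_arr[OF d(4)] c1 c2] by simp
  qed
  have "(\<lambda>i\<in>{..<n}. Gm (\<iota> i) (Gm \<psi> v)) = (\<lambda>i\<in>{..<n}. Gm (\<iota> i) (Gm \<psi> w))"
  proof
    fix i show "(\<lambda>i\<in>{..<n}. Gm (\<iota> i) (Gm \<psi> v)) i = (\<lambda>i\<in>{..<n}. Gm (\<iota> i) (Gm \<psi> w)) i"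
    proof (cases "i < n")
      case True
      have "\<psi> \<cdot> \<iota> i \<in> hom F (N i) X" using comp_hom[OF cf(3)[OF True] d(4)] .
      then have "Gm (\<psi> \<cdot> \<iota> i) v = Gm (\<psi> \<cdot> \<iota> i) w" using c d(1) True by blast
      then show ?thesis using comp_i[OF True v] comp_i[OF True w] True by simp
    qed simp
  qed
  then have e: "Gm \<psi> v = Gm \<psi> w" using inj_onD[OF bij_betw_imp_inj_on[OF CP[OF d(2)]]] pv by blast
  have bk: "z = Gm \<phi> (Gm \<psi> z)" if z: "z \<in> G X" for z
  proof -
    have c1: "Cod F \<phi> = Dom F \<psi>" using hom_cod[OF d(3)] hom_dom[OF d(4)] by simp
    have c2: "z \<in> G (Cod F \<psi>)" using hom_cod[OF d(4)] z by simp
    have "Gm (\<psi> \<cdot> \<phi>) z = Gm \<phi> (Gm \<psi> z)" using Gm_comp[OF hom_arr[OF d(3)] hom_arr[OF d(4)] c1 c2] .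
    then show ?thesis using d(5) Gm_id[OF X z] by simp
  qed
  show ?thesis using bk[OF v] bk[OF w] e by simp
qed

lemma rglue:
  assumes X: "X \<in> Obj F"
    and yin: "\<And>W k. conn W \<Longrightarrow> k \<in> hom F W X \<Longrightarrow> y k \<in> G W"
    and ycp: "\<And>W k W' c. conn W \<Longrightarrow> k \<in> hom F W X \<Longrightarrow> conn W' \<Longrightarrow> c \<in> hom F W' W \<Longrightarrow> y (k \<cdot> c) = Gm c (y k)"
  shows "\<exists>v \<in> G X. \<forall>W k. conn W \<longrightarrow> k \<in> hom F W X \<longrightarrow> Gm k v = y k"
proof -
  obtain n N S \<iota> \<phi> \<psi> where d: "\<forall>i<n. conn (N i)" "is_coproduct F n N S \<iota>" "\<phi> \<in> hom F X S" "\<psi> \<in> hom F S X"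
     "\<psi> \<cdot> \<phi> = Id F X" "\<phi> \<cdot> \<psi> = Id F S" using decomp[OF X] by blast
  note cf = coprod_facts[OF d(2)]
  have pi: "\<psi> \<cdot> \<iota> i \<in> hom F (N i) X" if "i < n" for i using comp_hom[OF cf(3)[OF that] d(4)] .
  define t where "t = (\<lambda>i\<in>{..<n}. y (\<psi> \<cdot> \<iota> i))"
  have "t \<in> (\<Pi>\<^sub>E i\<in>{..<n}. G (N i))" unfolding t_def using yin pi d(1) by auto
  then have "t \<in> (\<lambda>v. \<lambda>i\<in>{..<n}. Gm (\<iota> i) v) ` G S"
    using CP[OF d(2)] unfolding bij_betw_def by simp
  then obtain u where u: "u \<in> G S" "(\<lambda>i\<in>{..<n}. Gm (\<iota> i) u) = t" by (auto simp del: restrict_apply)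
  have ui: "Gm (\<iota> i) u = y (\<psi> \<cdot> \<iota> i)" if i: "i < n" for i
    using fun_cong[OF u(2), of i] i unfolding t_def by simp
  define v where "v = Gm \<phi> u"
  have vG: "v \<in> G X" unfolding v_def using Gm_in[OF hom_arr[OF d(3)]] hom_dom[OF d(3)] hom_cod[OF d(3)] u by auto
  have "Gm k v = y k" if W: "conn W" and k: "k \<in> hom F W X" for W k
  proof -
    have pk: "\<phi> \<cdot> k \<in> hom F W S" using comp_hom[OF k d(3)] .
    obtain i g where ig: "i < n" "g \<in> hom F W (N i)" "\<phi> \<cdot> k = \<iota> i \<cdot> g" using conn_dec[OF W d(2) pk] by blast
    have ii: "\<iota> i \<in> hom F (N i) S" using cf(3)[OF ig(1)] .
    have "Gm k v = Gm (\<phi> \<cdot> k) u"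
    proof -
      have c1: "Cod F k = Dom F \<phi>" using hom_cod[OF k] hom_dom[OF d(3)] by simp
      have c2: "u \<in> G (Cod F \<phi>)" using hom_cod[OF d(3)] u by simp
      show ?thesis unfolding v_def using Gm_comp[OF hom_arr[OF k] hom_arr[OF d(3)] c1 c2] by simp
    qed
    also have "\<dots> = Gm (\<iota> i \<cdot> g) u" using ig(3) by simp
    also have "\<dots> = Gm g (Gm (\<iota> i) u)"
    proof -
      have c1: "Cod F g = Dom F (\<iota> i)" using hom_cod[OF ig(2)] hom_dom[OF ii] by simp
      have c2: "u \<in> G (Cod F (\<iota> i))" using hom_cod[OF ii] u by simp
      show ?thesis using Gm_comp[OF hom_arr[OF ig(2)] hom_arr[OF ii] c1 c2] .
    qed
    also have "\<dots> = Gm g (y (\<psi> \<cdot> \<iota> i))" using ui[OF ig(1)] by simp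
    also have "\<dots> = y ((\<psi> \<cdot> \<iota> i) \<cdot> g)" using ycp[OF d(1)[rule_format, OF ig(1)] pi[OF ig(1)] W ig(2)] by simp
    also have "(\<psi> \<cdot> \<iota> i) \<cdot> g = k"
    proof -
      have "(\<psi> \<cdot> \<iota> i) \<cdot> g = \<psi> \<cdot> (\<iota> i \<cdot> g)"
        using assoc[OF hom_arr[OF ig(2)] hom_arr[OF ii] hom_arr[OF d(4)]] hom_cod[OF ig(2)] hom_dom[OF ii]
          hom_cod[OF ii] hom_dom[OF d(4)] by simp
      also have "\<dots> = \<psi> \<cdot> (\<phi> \<cdot> k)" using ig(3) by simp
      also have "\<dots> = (\<psi> \<cdot> \<phi>) \<cdot> k"
        using assoc[OF hom_arr[OF k] hom_arr[OF d(3)] hom_arr[OF d(4)]] hom_cod[OF k] hom_dom[OF d(3)]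
          hom_cod[OF d(3)] hom_dom[OF d(4)] by simp
      also have "\<dots> = k" using d(5) id_l[OF hom_arr[OF k]] hom_cod[OF k] by simp
      finally show ?thesis .
    qed
    finally show ?thesis .
  qed
  then show ?thesis using vG by blast
qed


lemma rhs_sheaf: "is_sheaf F (pushforward_incl F C J) G Gm"
  unfolding is_sheaf_def
proof (intro ballI allI impI)
  fix X R x
  assume X: "X \<in> Obj F" and R: "R \<in> pushforward_incl F C J X"
    and hx: "(\<forall>f\<in>R. x f \<in> G (Dom F f)) \<and> (\<forall>f\<in>R. \<forall>g\<in>Arr F. Cod F g = Dom F f \<longrightarrow> x (f \<cdot> g) = Gm g (x f))"
  have xin: "\<And>f. f \<in> R \<Longrightarrow> x f \<in> G (Dom F f)" using hx by blast
  have xm: "\<And>f g. f \<in> R \<Longrightarrow> g \<in> Arr F \<Longrightarrow> Cod F g = Dom F f \<Longrightarrow> x (f \<cdot> g) = Gm g (x f)" using hx by blast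
  have sv: "sieve F X R" and cvr: "\<And>Y h. conn Y \<Longrightarrow> h \<in> hom F Y X \<Longrightarrow> {g \<in> Arr C. Cod F g = Y \<and> h \<cdot> g \<in> R} \<in> J Y"
    using R unfolding pf_iff by blast+
  have Rarr: "\<And>f. f \<in> R \<Longrightarrow> f \<in> Arr F \<and> Cod F f = X" using sv unfolding sieve_def by blast
  have Rcl: "\<And>f g. f \<in> R \<Longrightarrow> g \<in> Arr F \<Longrightarrow> Cod F g = Dom F f \<Longrightarrow> f \<cdot> g \<in> R" using sv unfolding sieve_def by blast
  define Rh where "Rh h = {g \<in> Arr C. Cod F g = Dom F h \<and> h \<cdot> g \<in> R}" for h
  have loc: "\<exists>!s. s \<in> G Y \<and> (\<forall>g \<in> Rh h. Gm g s = x (h \<cdot> g))" if Y: "conn Y" and h: "h \<in> hom F Y X" for Y h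
  proof (rule csheaf_use[OF Y])
    show "Rh h \<in> J Y" unfolding Rh_def using cvr[OF Y h] hom_dom[OF h] by simp
    show "\<forall>g \<in> Rh h. x (h \<cdot> g) \<in> G (Dom F g)"
    proof
      fix g assume g: "g \<in> Rh h"
      then have "g \<in> Arr F" "Cod F g = Dom F h" "h \<cdot> g \<in> R" unfolding Rh_def arrC_iff by auto
      then show "x (h \<cdot> g) \<in> G (Dom F g)" using xin comp_arr[of g h] hom_arr[OF h] by metis
    qed
    show "\<forall>g \<in> Rh h. \<forall>c \<in> Arr C. Cod F c = Dom F g \<longrightarrow> x (h \<cdot> (g \<cdot> c)) = Gm c (x (h \<cdot> g))"
    proof (intro ballI impI)
      fix g c assume g: "g \<in> Rh h" and c: "c \<in> Arr C" "Cod F c = Dom F g"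
      have ga: "g \<in> Arr F" "Cod F g = Dom F h" "h \<cdot> g \<in> R" using g unfolding Rh_def arrC_iff by auto
      have ca: "c \<in> Arr F" using c arrC_iff by auto
      have hg: "Dom F (h \<cdot> g) = Dom F g" using comp_arr[OF ga(1) hom_arr[OF h] ga(2)] by simp
      have "h \<cdot> (g \<cdot> c) = h \<cdot> g \<cdot> c" using assoc[OF ca ga(1) hom_arr[OF h] c(2) ga(2)] .
      then show "x (h \<cdot> (g \<cdot> c)) = Gm c (x (h \<cdot> g))" using xm[OF ga(3) ca] c(2) hg by simp
    qed
  qed
  define y where "y h = (THE s. s \<in> G (Dom F h) \<and> (\<forall>g \<in> Rh h. Gm g s = x (h \<cdot> g)))" for h
  have yprop: "y h \<in> G Y \<and> (\<forall>g \<in> Rh h. Gm g (y h) = x (h \<cdot> g))" if Y: "conn Y" and h: "h \<in> hom F Y X" for Y h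
    using theI'[OF loc[OF Y h]] hom_dom[OF h] unfolding y_def by simp
  have yuniq: "s = y h" if Y: "conn Y" and h: "h \<in> hom F Y X" and s: "s \<in> G Y" "\<forall>g \<in> Rh h. Gm g s = x (h \<cdot> g)" for Y h s
    using loc[OF Y h] yprop[OF Y h] s by blast
  have ex: "\<exists>v \<in> G X. \<forall>W k. conn W \<longrightarrow> k \<in> hom F W X \<longrightarrow> Gm k v = y k"
  proof (rule rglue[OF X])
    show "y k \<in> G W" if "conn W" "k \<in> hom F W X" for W k using yprop[OF that] by blast
    show "y (k \<cdot> c) = Gm c (y k)" if W: "conn W" and k: "k \<in> hom F W X" and W': "conn W'" and c: "c \<in> hom F W' W" for W k W' c
    proof (rule yuniq[symmetric])
      show kc: "k \<cdot> c \<in> hom F W' X" using comp_hom[OF c k] .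
      show "conn W'" by (rule W')
      have yk: "y k \<in> G W" using yprop[OF W k] by blast
      show "Gm c (y k) \<in> G W'" using Gm_in[OF hom_arr[OF c]] hom_dom[OF c] hom_cod[OF c] yk by auto
      show "\<forall>g \<in> Rh (k \<cdot> c). Gm g (Gm c (y k)) = x (k \<cdot> c \<cdot> g)"
      proof
        fix g assume g: "g \<in> Rh (k \<cdot> c)"
        have ga: "g \<in> Arr F" "conn (Dom F g)" "Cod F g = W'" "k \<cdot> c \<cdot> g \<in> R"
          using g hom_dom[OF kc] unfolding Rh_def arrC_iff by auto
        have cg: "c \<cdot> g \<in> Arr F" "Dom F (c \<cdot> g) = Dom F g" "Cod F (c \<cdot> g) = W"
          using comp_arr[OF ga(1) hom_arr[OF c]] ga(3) hom_dom[OF c] hom_cod[OF c] by auto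
        have as: "k \<cdot> (c \<cdot> g) = k \<cdot> c \<cdot> g"
          using assoc[OF ga(1) hom_arr[OF c] hom_arr[OF k]] ga(3) hom_dom[OF c] hom_cod[OF c] hom_dom[OF k] by simp
        have "c \<cdot> g \<in> Rh k" unfolding Rh_def arrC_iff using cg ga(2) W hom_dom[OF k] as ga(4) by simp
        then have "Gm (c \<cdot> g) (y k) = x (k \<cdot> (c \<cdot> g))" using yprop[OF W k] by blast
        moreover have "Gm (c \<cdot> g) (y k) = Gm g (Gm c (y k))"
          using Gm_comp[OF ga(1) hom_arr[OF c]] ga(3) hom_dom[OF c] hom_cod[OF c] yk by simp
        ultimately show "Gm g (Gm c (y k)) = x (k \<cdot> c \<cdot> g)" using as by simp
      qed
    qed
  qed
  then obtain v where v: "v \<in> G X" "\<And>W k. conn W \<Longrightarrow> k \<in> hom F W X \<Longrightarrow> Gm k v = y k" by blast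
  have yx: "y k = x k" if W: "conn W" and k: "k \<in> hom F W X" and kR: "k \<in> R" for W k
  proof -
    have ka: "k \<in> Arr F" "Dom F k = W" using k hom_arr hom_dom by auto
    have iW: "Id F W \<in> hom F W W" using id_hom conn_obj[OF W] by blast
    have e: "k \<cdot> Id F W = k" using id_r[OF ka(1)] ka by simp
    have "Id F W \<in> Rh k" unfolding Rh_def arrC_iff using iW W ka e kR hom_arr hom_dom hom_cod by auto
    then have "Gm (Id F W) (y k) = x k" using yprop[OF W k] e by metis
    moreover have "Gm (Id F W) (y k) = y k" using Gm_id[OF conn_obj[OF W]] yprop[OF W k] by blast
    ultimately show ?thesis by simp
  qed
  have amal: "\<forall>f \<in> R. Gm f v = x f"
  proof
    fix f assume f: "f \<in> R"
    have fa: "f \<in> Arr F" "Cod F f = X" using Rarr[OF f] by auto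
    show "Gm f v = x f"
    proof (rule rsep[OF dom_obj[OF fa(1)]])
      show "Gm f v \<in> G (Dom F f)" using Gm_in[OF fa(1)] fa(2) v(1) by simp
      show "x f \<in> G (Dom F f)" using xin[OF f] .
      fix W k assume W: "conn W" and k: "k \<in> hom F W (Dom F f)"
      have fh: "f \<in> hom F (Dom F f) X" using fa homI by fastforce
      have fk: "f \<cdot> k \<in> hom F W X" using comp_hom[OF k fh] .
      have fkR: "f \<cdot> k \<in> R" using Rcl[OF f hom_arr[OF k] hom_cod[OF k]] .
      have "Gm k (Gm f v) = Gm (f \<cdot> k) v" using Gm_comp[OF hom_arr[OF k] fa(1)] hom_cod[OF k] fa(2) v(1) by simp
      also have "\<dots> = y (f \<cdot> k)" using v(2)[OF W fk] .
      also have "\<dots> = x (f \<cdot> k)" using yx[OF W fk fkR] .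
      also have "\<dots> = Gm k (x f)" using xm[OF f hom_arr[OF k] hom_cod[OF k]] .
      finally show "Gm k (Gm f v) = Gm k (x f)" .
    qed
  qed
  have un: "s = s'" if s: "s \<in> G X" "\<forall>f \<in> R. Gm f s = x f" and s': "s' \<in> G X" "\<forall>f \<in> R. Gm f s' = x f" for s s'
  proof (rule rsep[OF X s(1) s'(1)])
    fix W k assume W: "conn W" and k: "k \<in> hom F W X"
    have gen: "Gm k z = y k" if z: "z \<in> G X" "\<forall>f \<in> R. Gm f z = x f" for z
    proof (rule yuniq[OF W k])
      show "Gm k z \<in> G W" using Gm_in[OF hom_arr[OF k]] hom_dom[OF k] hom_cod[OF k] z(1) by auto
      show "\<forall>g \<in> Rh k. Gm g (Gm k z) = x (k \<cdot> g)"
      proof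
        fix g assume g: "g \<in> Rh k"
        have ga: "g \<in> Arr F" "Cod F g = Dom F k" "k \<cdot> g \<in> R" using g unfolding Rh_def arrC_iff by auto
        have "Gm (k \<cdot> g) z = Gm g (Gm k z)" using Gm_comp[OF ga(1) hom_arr[OF k] ga(2)] hom_cod[OF k] z(1) by simp
        then show "Gm g (Gm k z) = x (k \<cdot> g)" using z(2) ga(3) by simp
      qed
    qed
    show "Gm k s = Gm k s'" using gen[OF s] gen[OF s'] by simp
  qed
  show "\<exists>!s. s \<in> G X \<and> (\<forall>f\<in>R. Gm f s = x f)" using v(1) amal un by blast
qed

end

theorem mainTheorem12:
  fixes F :: "('o, 'm) cat" and J :: "'o \<Rightarrow> 'm set set"
    and G :: "'o \<Rightarrow> 'v set" and Gm :: "'m \<Rightarrow> 'v \<Rightarrow> 'v"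
  assumes "F_category F"
    and "grothendieck_topology (connected_part F) J"
    and "presheaf F G Gm"
  shows "is_sheaf F (pushforward_incl F (connected_part F) J) G Gm \<longleftrightarrow>
           (is_sheaf (connected_part F) J G Gm \<and>
            (\<forall>Z. is_initial F Z \<longrightarrow> (\<exists>v. G Z = {v})) \<and>
            (\<forall>n N S \<iota>. is_coproduct F n N S \<iota> \<longrightarrow>
               bij_betw (\<lambda>v. \<lambda>i\<in>{..<n}. Gm (\<iota> i) v) (G S) (\<Pi>\<^sub>E i\<in>{..<n}. G (N i))))"
proof
  assume L: "is_sheaf F (pushforward_incl F (connected_part F) J) G Gm"
  have loc: "fc_lhs F J G Gm" by (intro fc_lhs.intro fc.intro fc_lhs_axioms.intro assms L)
  show "is_sheaf (connected_part F) J G Gm \<and>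
            (\<forall>Z. is_initial F Z \<longrightarrow> (\<exists>v. G Z = {v})) \<and>
            (\<forall>n N S \<iota>. is_coproduct F n N S \<iota> \<longrightarrow>
               bij_betw (\<lambda>v. \<lambda>i\<in>{..<n}. Gm (\<iota> i) v) (G S) (\<Pi>\<^sub>E i\<in>{..<n}. G (N i)))"
    using fc_lhs.lhs_a[OF loc] fc_lhs.lhs_b[OF loc] fc_lhs.lhs_c[OF loc] by blast
next
  assume R: "is_sheaf (connected_part F) J G Gm \<and>
            (\<forall>Z. is_initial F Z \<longrightarrow> (\<exists>v. G Z = {v})) \<and>
            (\<forall>n N S \<iota>. is_coproduct F n N S \<iota> \<longrightarrow>
               bij_betw (\<lambda>v. \<lambda>i\<in>{..<n}. Gm (\<iota> i) v) (G S) (\<Pi>\<^sub>E i\<in>{..<n}. G (N i)))"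
  have loc: "fc_rhs F J G Gm"
  proof (intro fc_rhs.intro fc.intro fc_rhs_axioms.intro assms)
    show "is_sheaf (connected_part F) J G Gm" using R by blast
    fix n N S \<iota> assume "is_coproduct F n N S \<iota>"
    then show "bij_betw (\<lambda>v. \<lambda>i\<in>{..<n}. Gm (\<iota> i) v) (G S) (\<Pi>\<^sub>E i\<in>{..<n}. G (N i))" using R by blast
  qed
  show "is_sheaf F (pushforward_incl F (connected_part F) J) G Gm" using fc_rhs.rhs_sheaf[OF loc] .
qed

end
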